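(* Let $(A,\cdot)$ be an associative algebra over a field $\mathbf{k}$ of characteristic $0$ and $N:A\to A$ a Nijenhuis operator on it. For $n\ge1$ define $\Psi_n:\mathrm{Hom}(A^{\otimes n},A)\to\mathrm{Hom}(A^{\otimes n+1},A)$ by $\Psi_n(f)=(-1)^{n+1}\delta_{\mathrm{Hoch}}f$, where $\delta_{\mathrm{Hoch}}$ is the Hochschild coboundary of $(A,\cdot)$ with adjoint coefficients. Then the maps $\Psi_n$ induce a homomorphism $\Psi:H^n(N)\to H^{n+1}_{\mathrm{Hoch}}(A_N;A_N)$, $[f]\mapsto[\Psi_n(f)]$, from the cohomology of the Nijenhuis operator $N$ to the Hochschild cohomology of the deformed associative algebra $A_N$ with coefficients in itself.
   Context: A Nijenhuis operator: linear $N$ with $N(a)N(b)=N(N(a)b+aN(b)-N(ab))$. The deformed algebra is $A_N=(A,\cdot_N)$ with $a\cdot_Nb=N(a)\cdot b+a\cdot N(b)-N(a\cdot b)$ (associative). $(\delta_{\mathrm{Hoch}}f)(a_1,\dots,a_{n+1})=a_1\cdot f(a_2,\dots,a_{n+1})+\sum_{i=1}^n(-1)^if(a_1,\dots,a_i\cdot a_{i+1},\dots,a_{n+1})+(-1)^{n+1}f(a_1,\dots,a_n)\cdot a_{n+1}$. $H^\bullet_{\mathrm{Hoch}}(A_N;A_N)$ is the Hochschild cohomology of $A_N$ with coefficients in the adjoint bimodule (same formula with $\cdot_N$). $H^\bullet(N)$ is the cohomology of $\{\bigoplus_{n\ge0}\mathrm{Hom}(A^{\otimes n},A),d_N\}$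 where for $n\ge1$: $(d_Nf)(a_1,\dots,a_{n+1})=N(a_1)f(a_2,\dots,a_{n+1})-(-1)^nf(a_1,\dots,a_n)N(a_{n+1})+\sum_{i=1}^n(-1)^if(a_1,\dots,a_{i-1},a_i\cdot_Na_{i+1},\dots,a_{n+1})-N\big((\delta_{\mathrm{Hoch}}f)(a_1,\dots,a_{n+1})\big)$, and for $a\in A$: $d_N(a)(b)=N(b)a-aN(b)-N(ba-ab)$. *)

theory Defs
  imports Main "HOL.Modules"
begin

text \<open>Cochains Hom(A^{\<otimes>n},A) are represented as functions on lists of elements of A,
  only their values on lists of length n being relevant; a 0-cochain g is the element g [].\<close>

definition sgnp :: "nat \<Rightarrow> 'a::ab_group_add \<Rightarrow> 'a" where
  "sgnp i x = (if even i then x else - x)"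

definition multilinear :: "('k \<Rightarrow> 'a::ab_group_add \<Rightarrow> 'a) \<Rightarrow> nat \<Rightarrow> ('a list \<Rightarrow> 'a) \<Rightarrow> bool" where
  "multilinear scale n f \<longleftrightarrow>
     (\<forall>xs. length xs = n \<longrightarrow> (\<forall>i<n. \<forall>x y c.
        f (xs[i := x + y]) = f (xs[i := x]) + f (xs[i := y]) \<and>
        f (xs[i := scale c x]) = scale c (f (xs[i := x]))))"

definition linear_map :: "('k \<Rightarrow> 'a::ab_group_add \<Rightarrow> 'a) \<Rightarrow> ('a \<Rightarrow> 'a) \<Rightarrow> bool" where
  "linear_map scale N \<longleftrightarrow> (\<forall>x y. N (x + y) = N x + N y) \<and> (\<forall>c x. N (scale c x) = scale c (N x))"

definition nijenhuis :: "('k \<Rightarrow> 'a::ring \<Rightarrow> 'a) \<Rightarrow> ('a \<Rightarrow> 'a) \<Rightarrow> bool" where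
  "nijenhuis scale N \<longleftrightarrow> linear_map scale N \<and>
     (\<forall>a b. N a * N b = N (N a * b + a * N b - N (a * b)))"

definition defprod :: "('a::ring \<Rightarrow> 'a) \<Rightarrow> 'a \<Rightarrow> 'a \<Rightarrow> 'a" where
  "defprod N a b = N a * b + a * N b - N (a * b)"

text \<open>Replace a_i, a_{i+1} (1-based index i) by mu a_i a_{i+1}.\<close>
definition merge :: "('a \<Rightarrow> 'a \<Rightarrow> 'a) \<Rightarrow> nat \<Rightarrow> 'a list \<Rightarrow> 'a list" where
  "merge mu i xs = take (i - 1) xs @ mu (xs ! (i - 1)) (xs ! i) # drop (i + 1) xs"

definition hoch :: "('a::ab_group_add \<Rightarrow> 'a \<Rightarrow> 'a) \<Rightarrow> nat \<Rightarrow> ('a list \<Rightarrow> 'a) \<Rightarrow> 'a list \<Rightarrow> 'a" where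
  "hoch mu n f xs = mu (xs ! 0) (f (tl xs))
     + (\<Sum>i\<in>{1..n}. sgnp i (f (merge mu i xs)))
     + sgnp (n + 1) (mu (f (take n xs)) (xs ! n))"

definition dN :: "('a::ring \<Rightarrow> 'a) \<Rightarrow> nat \<Rightarrow> ('a list \<Rightarrow> 'a) \<Rightarrow> 'a list \<Rightarrow> 'a" where
  "dN N n f xs =
    (if n = 0 then
       N (xs ! 0) * f [] - f [] * N (xs ! 0) - N (xs ! 0 * f [] - f [] * xs ! 0)
     else
       N (xs ! 0) * f (tl xs) - sgnp n (f (take n xs) * N (xs ! n))
       + (\<Sum>i\<in>{1..n}. sgnp i (f (merge (defprod N) i xs)))
       - N (hoch (*) n f xs))"

definition Psi :: "nat \<Rightarrow> ('a::ring list \<Rightarrow> 'a) \<Rightarrow> 'a list \<Rightarrow> 'a" where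
  "Psi n f xs = sgnp (n + 1) (hoch (*) n f xs)"

end

theory Submission imports Defs begin

lemma sgnp_Suc[simp]: "sgnp (Suc k) x = - sgnp k x"
  by (simp add: sgnp_def)
lemma sgnp_0[simp]: "sgnp 0 x = x" by (simp add: sgnp_def)
lemma sgnp_add_idx: "sgnp (i + j) x = sgnp i (sgnp j x)"
  by (simp add: sgnp_def)
lemma sgnp_comm: "sgnp i (sgnp j x) = sgnp j (sgnp i x)"
  by (simp add: sgnp_def)
lemma sgnp_plus: "sgnp k (x + y) = sgnp k x + sgnp k y"
  by (simp add: sgnp_def)
lemma sgnp_minus: "sgnp k (- x) = - sgnp k x"
  by (simp add: sgnp_def)
lemma sgnp_diff: "sgnp k (x - y) = sgnp k x - sgnp k y"
  by (simp add: sgnp_def)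
lemma sgnp_double[simp]: "sgnp (b + b) x = x"
  by (simp add: sgnp_def)
lemma sgnp_sum: "sgnp k (sum g A) = (\<Sum>a\<in>A. sgnp k (g a))"
  by (simp add: sgnp_def sum_negf)
lemma additive_sgnp: "additive h \<Longrightarrow> h (sgnp k x) = sgnp k (h x)"
  by (simp add: sgnp_def additive.minus)

lemma double_sum_cancel:
  fixes T1 T2 :: "nat \<Rightarrow> nat \<Rightarrow> 'a::ab_group_add"
  assumes X1: "\<And>a b. a < b \<Longrightarrow> b \<le> n+1 \<Longrightarrow> T1 a b = T2 (b+1) a"
    and X2: "\<And>a b. a < b \<Longrightarrow> b \<le> n+1 \<Longrightarrow> T2 a b = T1 (b+1) a"
    and Y: "\<And>b. b \<le> n+1 \<Longrightarrow> T1 b b + T2 b b = T1 (b+1) b + T2 (b+1) b"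
  shows "(\<Sum>a\<in>{0..n+2}. \<Sum>b\<in>{0..n+1}. sgnp (a+b) (T1 a b))
       + (\<Sum>a\<in>{0..n+2}. \<Sum>b\<in>{0..n+1}. sgnp (a+b) (T2 a b)) = 0"
proof -
  define K where "K = {0..n+2} \<times> {0..n+1}"
  define A where "A = {(a,b). a < b \<and> b \<le> n+1}"
  define B where "B = {(a,b). b+1 < a \<and> a \<le> n+2}"
  define C where "C = {(a,b). a = b \<and> b \<le> n+1}"
  define D where "D = {(a,b). a = b+1 \<and> b \<le> n+1}"
  define G1 where "G1 = (\<lambda>(a,b). sgnp (a+b) (T1 a b))"
  define G2 where "G2 = (\<lambda>(a,b). sgnp (a+b) (T2 a b))"
  have KK: "K = A \<union> B \<union> C \<union> D" unfolding K_def A_def B_def C_def D_def by auto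
  have finK: "finite K" by (simp add: K_def)
  have "finite (A \<union> B \<union> C \<union> D)" using KK finK by simp
  hence fin: "finite A" "finite B" "finite C" "finite D" by simp_all
  have split: "sum G K = sum G A + sum G B + sum G C + sum G D" for G :: "nat \<times> nat \<Rightarrow> 'a"
    unfolding KK using fin
    by (subst sum.union_disjoint; (auto simp: A_def B_def C_def D_def)?)+
  have dsum: "(\<Sum>a\<in>{0..n+2}. \<Sum>b\<in>{0..n+1}. sgnp (a+b) (T a b)) = sum (\<lambda>(a,b). sgnp (a+b) (T a b)) K"
    for T :: "nat \<Rightarrow> nat \<Rightarrow> 'a"
    unfolding K_def by (rule sum.cartesian_product)
  define phi where "phi = (\<lambda>(a::nat,b::nat). (b+1,a))"
  have bij: "bij_betw phi A B"
  proof (rule bij_betw_byWitness[where f'="\<lambda>(a,b). (b, a - 1)"])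
  qed (auto simp: phi_def A_def B_def)
  have rB1: "sum G1 B = - sum G2 A"
  proof -
    have "sum G1 B = sum (G1 \<circ> phi) A" using sum.reindex_bij_betw[OF bij, symmetric] by (simp add: comp_def)
    also have "\<dots> = sum (\<lambda>p. - G2 p) A"
      by (rule sum.cong) (auto simp: A_def phi_def G1_def G2_def X2 sgnp_add_idx sgnp_comm sgnp_minus)
    finally show ?thesis by (simp add: sum_negf)
  qed
  have rB2: "sum G2 B = - sum G1 A"
  proof -
    have "sum G2 B = sum (G2 \<circ> phi) A" using sum.reindex_bij_betw[OF bij, symmetric] by (simp add: comp_def)
    also have "\<dots> = sum (\<lambda>p. - G1 p) A"
      by (rule sum.cong) (auto simp: A_def phi_def G1_def G2_def X1 sgnp_add_idx sgnp_comm sgnp_minus)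
    finally show ?thesis by (simp add: sum_negf)
  qed
  have Ceq: "sum G C = sum (\<lambda>b. G (b,b)) {0..n+1}" for G :: "nat \<times> nat \<Rightarrow> 'a"
  proof -
    have "C = (\<lambda>b. (b,b)) ` {0..n+1}" by (auto simp: C_def)
    moreover have "inj_on (\<lambda>b. (b,b)) {0..n+1}" by (auto simp: inj_on_def)
    ultimately show ?thesis by (simp add: sum.reindex)
  qed
  have Deq: "sum G D = sum (\<lambda>b. G (b+1,b)) {0..n+1}" for G :: "nat \<times> nat \<Rightarrow> 'a"
  proof -
    have "D = (\<lambda>b. (b+1,b)) ` {0..n+1}" by (auto simp: D_def)
    moreover have "inj_on (\<lambda>b. (b+1,b)) {0..n+1}" by (auto simp: inj_on_def)
    ultimately show ?thesis by (simp add: sum.reindex)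
  qed
  have CD: "sum G1 C + sum G1 D + sum G2 C + sum G2 D = 0"
  proof -
    have "sum G1 C + sum G1 D + sum G2 C + sum G2 D
       = (\<Sum>b\<in>{0..n+1}. (T1 b b + T2 b b) - (T1 (b+1) b + T2 (b+1) b))"
      unfolding Ceq Deq G1_def G2_def
      by (simp add: sum.distrib sum_subtractf sum_negf algebra_simps)
    also have "\<dots> = 0" by (rule sum.neutral) (simp add: Y)
    finally show ?thesis .
  qed
  show ?thesis
    unfolding dsum split G1_def[symmetric] G2_def[symmetric]
    using CD rB1 rB2 by (simp add: algebra_simps)
qed


lemma length_merge[simp]: "1 \<le> k \<Longrightarrow> k < length xs \<Longrightarrow> length (merge m k xs) = length xs - 1"
  unfolding merge_def by simp

lemma nth_merge: "1 \<le> k \<Longrightarrow> k < length xs \<Longrightarrow> j < length xs - 1 \<Longrightarrow>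
  merge m k xs ! j = (if j < k - 1 then xs ! j else if j = k - 1 then m (xs ! (k-1)) (xs ! k) else xs ! (j+1))"
  unfolding merge_def by (auto simp: nth_append min_def nth_Cons')


lemma merge_hd: "2 \<le> k \<Longrightarrow> k < length x \<Longrightarrow> merge m k x ! 0 = x ! 0"
  by (simp add: nth_merge)
lemma merge_tl: "2 \<le> k \<Longrightarrow> k < length x \<Longrightarrow> tl (merge m k x) = merge m (k-1) (tl x)"
  by (rule nth_equalityI) (auto simp: nth_merge nth_tl)
lemma merge_take: "1 \<le> k \<Longrightarrow> k \<le> n \<Longrightarrow> length x = n+2 \<Longrightarrow> take n (merge m k x) = merge m k (take (n+1) x)"
  by (rule nth_equalityI) (auto simp: nth_merge)
lemma merge_nth_last: "1 \<le> k \<Longrightarrow> k \<le> n \<Longrightarrow> length x = n+2 \<Longrightarrow> merge m k x ! n = x ! (n+1)"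
  by (auto simp: nth_merge)
lemma merge_merge: "1 \<le> a \<Longrightarrow> a < b \<Longrightarrow> b + 1 < length x \<Longrightarrow>
   merge m2 b (merge m1 a x) = merge m1 a (merge m2 (b+1) x)"
  by (rule nth_equalityI) (auto simp: nth_merge)
lemma merge1_tl: "1 < length x \<Longrightarrow> tl (merge m 1 x) = tl (tl x)"
  by (rule nth_equalityI) (auto simp: nth_merge nth_tl)
lemma merge1_hd: "1 < length x \<Longrightarrow> merge m 1 x ! 0 = m (x!0) (x!1)"
  by (auto simp: nth_merge)
lemma mergelast_take: "length x = n+2 \<Longrightarrow> take n (merge m (n+1) x) = take n x"
  by (rule nth_equalityI) (auto simp: nth_merge)
lemma mergelast_nth: "length x = n+2 \<Longrightarrow> merge m (n+1) x ! n = m (x!n) (x!(n+1))"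
  by (auto simp: nth_merge)

definition hoch3 :: "('a \<Rightarrow> 'a \<Rightarrow> 'a) \<Rightarrow> ('a \<Rightarrow> 'a \<Rightarrow> 'a) \<Rightarrow> ('a \<Rightarrow> 'a \<Rightarrow> 'a) \<Rightarrow> nat
   \<Rightarrow> ('a list \<Rightarrow> 'a) \<Rightarrow> 'a list \<Rightarrow> 'a::ab_group_add" where
  "hoch3 L m R n f xs = L (xs ! 0) (f (tl xs)) + (\<Sum>i\<in>{1..n}. sgnp i (f (merge m i xs)))
     + sgnp (n + 1) (R (f (take n xs)) (xs ! n))"

lemma hoch_hoch3: "hoch mu n f xs = hoch3 mu mu mu n f xs"
  by (simp add: hoch_def hoch3_def)

definition face :: "('a \<Rightarrow> 'a \<Rightarrow> 'a) \<Rightarrow> ('a \<Rightarrow> 'a \<Rightarrow> 'a) \<Rightarrow> ('a \<Rightarrow> 'a \<Rightarrow> 'a) \<Rightarrow> nat \<Rightarrow> nat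
   \<Rightarrow> ('a list \<Rightarrow> 'a) \<Rightarrow> 'a list \<Rightarrow> 'a" where
  "face L m R n k f xs = (if k = 0 then L (xs ! 0) (f (tl xs)) else if k \<le> n then f (merge m k xs)
     else R (f (take n xs)) (xs ! n))"

lemma hoch3_face: "hoch3 L m R n f xs = (\<Sum>k\<in>{0..n+1}. sgnp k (face L m R n k f xs))"
proof -
  have "(\<Sum>k\<in>{0..n+1}. sgnp k (face L m R n k f xs))
     = (\<Sum>k\<in>{0..n}. sgnp k (face L m R n k f xs)) + sgnp (n+1) (R (f (take n xs)) (xs ! n))"
    by (simp add: face_def)
  also have "(\<Sum>k\<in>{0..n}. sgnp k (face L m R n k f xs))
     = L (xs ! 0) (f (tl xs)) + (\<Sum>k\<in>{1..n}. sgnp k (face L m R n k f xs))"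
    by (simp add: sum.atLeast_Suc_atMost face_def)
  also have "(\<Sum>k\<in>{1..n}. sgnp k (face L m R n k f xs)) = (\<Sum>i\<in>{1..n}. sgnp i (f (merge m i xs)))"
    by (rule sum.cong) (auto simp: face_def)
  finally show ?thesis by (simp add: hoch3_def)
qed

lemma face_comm:
  assumes as12: "\<And>a u b. L1 a (R2 u b) = R2 (L1 a u) b"
    and ab: "a < b" "b \<le> n+1" and lx: "length x = n+2"
  shows "face L1 m1 R1 (n+1) a (face L2 m2 R2 n b f) x = face L2 m2 R2 (n+1) (b+1) (face L1 m1 R1 n a f) x"
proof -
  consider "a = 0" "b \<le> n" | "a = 0" "b = n+1" | "a \<ge> 1" "b \<le> n" | "a \<ge> 1" "b = n+1"
    using ab by linarith
  then show ?thesis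
  proof cases
    case 1
    then show ?thesis using ab lx
      by (simp add: face_def merge_hd merge_tl)
  next
    case 2
    have "tl (take (Suc n) x) = take n (tl x)" by (simp add: tl_take)
    then show ?thesis using 2 ab lx
      by (simp add: face_def as12 nth_tl)
  next
    case 3
    then show ?thesis using ab lx
      by (simp add: face_def merge_merge)
  next
    case 4
    then show ?thesis using ab lx
      by (simp add: face_def merge_take merge_nth_last)
  qed
qed


lemma merge_diag1: "1 \<le> b \<Longrightarrow> b \<le> n \<Longrightarrow> length x = n+2 \<Longrightarrow>
   merge m2 b (merge m1 b x) = map (\<lambda>j. if j < b-1 then x!j else if j = b-1 then m2 (m1 (x!(b-1)) (x!b)) (x!(b+1)) else x!(j+2)) [0..<n]"
  by (rule nth_equalityI) (auto simp: nth_merge)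
lemma merge_diag2: "1 \<le> b \<Longrightarrow> b \<le> n \<Longrightarrow> length x = n+2 \<Longrightarrow>
   merge m2 b (merge m1 (b+1) x) = map (\<lambda>j. if j < b-1 then x!j else if j = b-1 then m2 (x!(b-1)) (m1 (x!b) (x!(b+1))) else x!(j+2)) [0..<n]"
  by (rule nth_equalityI) (auto simp: nth_merge)
lemma map_upd: "i < n \<Longrightarrow> map (\<lambda>j. if j < i then g j else if j = i then v else h j) [0..<n]
   = (map (\<lambda>j. if j < i then g j else if j = i then 0 else h j) [0..<n])[i := v]"
  by (rule nth_equalityI) auto

lemma face_diag:
  fixes f :: "'a::ab_group_add list \<Rightarrow> 'a"
  assumes cL: "\<And>a b u. L1 a (L2 b u) + L2 a (L1 b u) = L2 (m1 a b) u + L1 (m2 a b) u"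
    and cm: "\<And>a b c. m2 (m1 a b) c + m1 (m2 a b) c = m2 a (m1 b c) + m1 a (m2 b c)"
    and cR: "\<And>u a b. R2 u (m1 a b) + R1 u (m2 a b) = R1 (R2 u a) b + R2 (R1 u a) b"
    and fadd: "\<And>ys i p q. length ys = n \<Longrightarrow> i < n \<Longrightarrow> f (ys[i:=p+q]) = f (ys[i:=p]) + f (ys[i:=q])"
    and b: "b \<le> n+1" and lx: "length x = n+2"
  shows "face L1 m1 R1 (n+1) b (face L2 m2 R2 n b f) x + face L2 m2 R2 (n+1) b (face L1 m1 R1 n b f) x
       = face L1 m1 R1 (n+1) (b+1) (face L2 m2 R2 n b f) x + face L2 m2 R2 (n+1) (b+1) (face L1 m1 R1 n b f) x"
proof -
  consider "b = 0" | "1 \<le> b" "b \<le> n" | "b = n+1" using b by linarith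
  then show ?thesis
  proof cases
    case 1
    then show ?thesis using lx
      using merge1_tl[of x] merge1_hd[of x] by (simp add: face_def nth_tl cL)
  next
    case 3
    then show ?thesis using lx
      using mergelast_take[OF lx] mergelast_nth[OF lx] by (simp add: face_def cR min_def)
  next
    case 2
    define ys where "ys = map (\<lambda>j. if j < b-1 then x!j else if j = b-1 then 0 else x!(j+2)) [0..<n]"
    have lys: "length ys = n" by (simp add: ys_def)
    have i: "b - 1 < n" using 2 by linarith
    have e: "map (\<lambda>j. if j < b-1 then x!j else if j = b-1 then v else x!(j+2)) [0..<n] = ys[b-1 := v]" for v
      unfolding ys_def using i by (intro nth_equalityI) auto
    have d1: "merge m2 b (merge m1 b x) = ys[b-1 := m2 (m1 (x!(b-1)) (x!b)) (x!(b+1))]"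
      by (subst merge_diag1[OF 2 lx]) (rule e)
    have d1': "merge m1 b (merge m2 b x) = ys[b-1 := m1 (m2 (x!(b-1)) (x!b)) (x!(b+1))]"
      by (subst merge_diag1[OF 2 lx]) (rule e)
    have d2: "merge m2 b (merge m1 (b+1) x) = ys[b-1 := m2 (x!(b-1)) (m1 (x!b) (x!(b+1)))]"
      by (subst merge_diag2[OF 2 lx]) (rule e)
    have d2': "merge m1 b (merge m2 (b+1) x) = ys[b-1 := m1 (x!(b-1)) (m2 (x!b) (x!(b+1)))]"
      by (subst merge_diag2[OF 2 lx]) (rule e)
    have "face L1 m1 R1 (n+1) b (face L2 m2 R2 n b f) x + face L2 m2 R2 (n+1) b (face L1 m1 R1 n b f) x
       = f (ys[b-1 := m2 (m1 (x!(b-1)) (x!b)) (x!(b+1))]) + f (ys[b-1 := m1 (m2 (x!(b-1)) (x!b)) (x!(b+1))])"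
      using 2 lx by (simp add: face_def d1 d1')
    also have "\<dots> = f (ys[b-1 := m2 (m1 (x!(b-1)) (x!b)) (x!(b+1)) + m1 (m2 (x!(b-1)) (x!b)) (x!(b+1))])"
      using fadd[OF lys i] by simp
    also have "\<dots> = f (ys[b-1 := m2 (x!(b-1)) (m1 (x!b) (x!(b+1))) + m1 (x!(b-1)) (m2 (x!b) (x!(b+1)))])"
      by (simp add: cm)
    also have "\<dots> = f (ys[b-1 := m2 (x!(b-1)) (m1 (x!b) (x!(b+1)))]) + f (ys[b-1 := m1 (x!(b-1)) (m2 (x!b) (x!(b+1)))])"
      using fadd[OF lys i] by simp
    also have "\<dots> = face L1 m1 R1 (n+1) (b+1) (face L2 m2 R2 n b f) x + face L2 m2 R2 (n+1) (b+1) (face L1 m1 R1 n b f) x"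
      using 2 lx by (simp add: face_def d2[simplified] d2'[simplified])
    finally show ?thesis .
  qed
qed


lemma face_lin:
  assumes "\<And>a. additive (L a)" "\<And>b. additive (\<lambda>u. R u b)" "finite B"
  shows "face L m R n k (\<lambda>y. \<Sum>b\<in>B. sgnp b (g b y)) x = (\<Sum>b\<in>B. sgnp b (face L m R n k (g b) x))"
proof -
  have r: "R (\<Sum>b\<in>B. h b) c = (\<Sum>b\<in>B. R (h b) c)" for h c
    using additive.sum[OF assms(2)[of c]] by simp
  have r2: "R (sgnp b u) c = sgnp b (R u c)" for b u c
    using additive_sgnp[OF assms(2)[of c]] by simp
  show ?thesis using assms(1) by (simp add: face_def additive.sum additive_sgnp r r2)
qed

lemma anticomm:
  fixes f :: "'a::ab_group_add list \<Rightarrow> 'a"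
  assumes aL1: "\<And>a. additive (L1 a)" and aL2: "\<And>a. additive (L2 a)"
    and aR1: "\<And>b. additive (\<lambda>u. R1 u b)" and aR2: "\<And>b. additive (\<lambda>u. R2 u b)"
    and as12: "\<And>a u b. L1 a (R2 u b) = R2 (L1 a u) b"
    and as21: "\<And>a u b. L2 a (R1 u b) = R1 (L2 a u) b"
    and cL: "\<And>a b u. L1 a (L2 b u) + L2 a (L1 b u) = L2 (m1 a b) u + L1 (m2 a b) u"
    and cm: "\<And>a b c. m2 (m1 a b) c + m1 (m2 a b) c = m2 a (m1 b c) + m1 a (m2 b c)"
    and cR: "\<And>u a b. R2 u (m1 a b) + R1 u (m2 a b) = R1 (R2 u a) b + R2 (R1 u a) b"
    and fadd: "\<And>ys i p q. length ys = n \<Longrightarrow> i < n \<Longrightarrow> f (ys[i:=p+q]) = f (ys[i:=p]) + f (ys[i:=q])"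
    and lx: "length x = n+2"
  shows "hoch3 L1 m1 R1 (n+1) (hoch3 L2 m2 R2 n f) x + hoch3 L2 m2 R2 (n+1) (hoch3 L1 m1 R1 n f) x = 0"
proof -
  have ex: "hoch3 L1 m1 R1 (n+1) (hoch3 L2 m2 R2 n f) x
     = (\<Sum>a\<in>{0..n+2}. \<Sum>b\<in>{0..n+1}. sgnp (a+b) (face L1 m1 R1 (n+1) a (face L2 m2 R2 n b f) x))"
    if aL1: "\<And>a. additive (L1 a)" and aR1: "\<And>b. additive (\<lambda>u. R1 u b)"
    for L1 m1 R1 L2 m2 R2
  proof -
    have h: "hoch3 L2 m2 R2 n f = (\<lambda>y. \<Sum>b\<in>{0..n+1}. sgnp b (face L2 m2 R2 n b f y))"
      by (rule ext) (rule hoch3_face)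
    have "hoch3 L1 m1 R1 (n+1) (hoch3 L2 m2 R2 n f) x
       = (\<Sum>a\<in>{0..n+2}. sgnp a (face L1 m1 R1 (n+1) a (hoch3 L2 m2 R2 n f) x))"
      by (simp add: hoch3_face)
    also have "\<dots> = (\<Sum>a\<in>{0..n+2}. \<Sum>b\<in>{0..n+1}. sgnp (a+b) (face L1 m1 R1 (n+1) a (face L2 m2 R2 n b f) x))"
      unfolding h
      by (intro sum.cong[OF refl], subst face_lin[OF aL1 aR1 finite_atLeastAtMost]) (simp only: sgnp_sum sgnp_add_idx)
    finally show ?thesis .
  qed
  show ?thesis
    unfolding ex[OF aL1 aR1] ex[OF aL2 aR2]
  proof (rule double_sum_cancel)
    fix a b assume "a < b" "b \<le> n+1"
    then show "face L1 m1 R1 (n+1) a (face L2 m2 R2 n b f) x = face L2 m2 R2 (n+1) (b+1) (face L1 m1 R1 n a f) x"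
      using face_comm[where ?L1.0=L1 and ?R2.0=R2 and ?m1.0=m1 and ?R1.0=R1 and ?L2.0=L2 and ?m2.0=m2 and ?f=f, OF as12 _ _ lx] by blast
  next
    fix a b assume "a < b" "b \<le> n+1"
    then show "face L2 m2 R2 (n+1) a (face L1 m1 R1 n b f) x = face L1 m1 R1 (n+1) (b+1) (face L2 m2 R2 n a f) x"
      using face_comm[where ?L1.0=L2 and ?R2.0=R1 and ?m1.0=m2 and ?R1.0=R2 and ?L2.0=L1 and ?m2.0=m1 and ?f=f, OF as21 _ _ lx] by blast
  next
    fix b assume "b \<le> n+1"
    then show "face L1 m1 R1 (n+1) b (face L2 m2 R2 n b f) x + face L2 m2 R2 (n+1) b (face L1 m1 R1 n b f) x
       = face L1 m1 R1 (n+1) (b+1) (face L2 m2 R2 n b f) x + face L2 m2 R2 (n+1) (b+1) (face L1 m1 R1 n b f) x"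
      using face_diag[where ?L1.0=L1 and ?R2.0=R2 and ?m1.0=m1 and ?R1.0=R1 and ?L2.0=L2 and ?m2.0=m2 and ?f=f, OF cL cm cR fadd _ lx] by blast
  qed
qed


definition lin :: "('k \<Rightarrow> 'a::ab_group_add \<Rightarrow> 'a) \<Rightarrow> ('a \<Rightarrow> 'a) \<Rightarrow> bool" where
  "lin scale h \<longleftrightarrow> (\<forall>x y. h (x + y) = h x + h y) \<and> (\<forall>c x. h (scale c x) = scale c (h x))"

lemma multilinear_lin: "multilinear scale n f \<longleftrightarrow> (\<forall>xs. length xs = n \<longrightarrow> (\<forall>i<n. lin scale (\<lambda>v. f (xs[i := v]))))"
  unfolding multilinear_def lin_def by auto

context module
begin

lemma lin_add: "lin scale h1 \<Longrightarrow> lin scale h2 \<Longrightarrow> lin scale (\<lambda>v. h1 v + h2 v)"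
  by (simp add: lin_def scale_right_distrib algebra_simps)
lemma lin_neg: "lin scale h \<Longrightarrow> lin scale (\<lambda>v. - h v)"
  by (simp add: lin_def)
lemma lin_sgnp: "lin scale h \<Longrightarrow> lin scale (\<lambda>v. sgnp k (h v))"
  by (cases "even k") (simp_all add: sgnp_def lin_neg)
lemma lin_sum: "finite A \<Longrightarrow> (\<And>a. a \<in> A \<Longrightarrow> lin scale (h a)) \<Longrightarrow> lin scale (\<lambda>v. \<Sum>a\<in>A. h a v)"
proof (induction A rule: finite_induct)
  case empty then show ?case by (simp add: lin_def)
next
  case (insert x F) then show ?case by (simp add: lin_add)
qed
lemma lin_comp: "lin scale h \<Longrightarrow> lin scale g \<Longrightarrow> lin scale (\<lambda>v. h (g v))"
  by (simp add: lin_def)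
lemma lin_id: "lin scale (\<lambda>v. v)" by (simp add: lin_def)

end

lemma tl_upd: "i \<ge> 1 \<Longrightarrow> tl (xs[i := v]) = (tl xs)[i - 1 := v]"
  by (cases xs; cases i) auto

lemma merge_upd:
  assumes "1 \<le> k" "k \<le> m" "length xs = m + 1" "i \<le> m"
  shows "\<exists>j \<phi>. j < m \<and> (\<phi> = (\<lambda>v. v) \<or> \<phi> = (\<lambda>v. mu v (xs ! k)) \<or> \<phi> = (\<lambda>v. mu (xs ! (k-1)) v))
     \<and> (\<forall>v. merge mu k (xs[i := v]) = (merge mu k xs)[j := \<phi> v])"
proof -
  consider "i < k - 1" | "i = k - 1" | "i = k" | "i > k" by linarith
  then show ?thesis
  proof cases
    case 1
    then show ?thesis using assms
      by (intro exI[of _ i] exI[of _ "\<lambda>v. v"]) (auto intro!: nth_equalityI simp: nth_merge nth_list_update)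
  next
    case 2
    then show ?thesis using assms
      by (intro exI[of _ i] exI[of _ "\<lambda>v. mu v (xs ! k)"]) (auto intro!: nth_equalityI simp: nth_merge nth_list_update)
  next
    case 3
    then show ?thesis using assms
      by (intro exI[of _ "k - 1"] exI[of _ "\<lambda>v. mu (xs ! (k-1)) v"]) (auto intro!: nth_equalityI simp: nth_merge nth_list_update)
  next
    case 4
    then show ?thesis using assms
      by (intro exI[of _ "i - 1"] exI[of _ "\<lambda>v. v"]) (auto intro!: nth_equalityI simp: nth_merge nth_list_update)
  qed
qed


lemma lin_cong: "(\<And>v. h v = g v) \<Longrightarrow> lin scale g \<Longrightarrow> lin scale h"
  by (simp add: lin_def)

lemma hoch_multilinear:
  fixes scale :: "'k::comm_ring_1 \<Rightarrow> 'a::ring \<Rightarrow> 'a"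
  assumes md: "module scale"
    and s1: "\<forall>c a b. scale c (a * b) = scale c a * b"
    and s2: "\<forall>c a b. scale c (a * b) = a * scale c b"
    and ml: "multilinear scale m f"
  shows "multilinear scale (m+1) (hoch (*) m f)"
proof -
  interpret module scale by (rule md)
  have lmul: "lin scale h \<Longrightarrow> lin scale (\<lambda>v. a * h v)" for h and a :: 'a
    using s2 by (simp add: lin_def distrib_left)
  have rmul: "lin scale h \<Longrightarrow> lin scale (\<lambda>v. h v * b)" for h and b :: 'a
    using s1 by (simp add: lin_def distrib_right)
  have fl: "length ys = m \<Longrightarrow> j < m \<Longrightarrow> lin scale (\<lambda>v. f (ys[j := v]))" for ys j
    using ml by (simp add: multilinear_lin)
  show ?thesis unfolding multilinear_lin
  proof (intro allI impI)
    fix xs :: "'a list" and i assume lx: "length xs = m + 1" and i: "i < m + 1"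
    have A: "lin scale (\<lambda>v. xs[i := v] ! 0 * f (tl (xs[i := v])))"
    proof (cases "i = 0")
      case True
      have "xs[i := v] ! 0 * f (tl (xs[i := v])) = v * f (tl xs)" for v
        using True lx by (cases xs) auto
      then show ?thesis by (rule lin_cong) (rule rmul[OF lin_id])
    next
      case False
      have "xs[i := v] ! 0 * f (tl (xs[i := v])) = xs ! 0 * f ((tl xs)[i - 1 := v])" for v
        using False lx by (simp add: tl_upd nth_list_update)
      then show ?thesis
        by (rule lin_cong) (rule lmul, rule fl, use lx i False in auto)
    qed
    have C: "lin scale (\<lambda>v. sgnp (m + 1) (f (take m (xs[i := v])) * xs[i := v] ! m))"
    proof (rule lin_sgnp, cases "i = m")
      case True
      have "f (take m (xs[i := v])) * xs[i := v] ! m = f (take m xs) * v" for v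
        using True lx by simp
      then show "lin scale (\<lambda>v. f (take m (xs[i := v])) * xs[i := v] ! m)"
        by (rule lin_cong) (rule lmul[OF lin_id])
    next
      case False
      have "f (take m (xs[i := v])) * xs[i := v] ! m = f ((take m xs)[i := v]) * xs ! m" for v
        using False lx by (simp add: take_update_swap)
      then show "lin scale (\<lambda>v. f (take m (xs[i := v])) * xs[i := v] ! m)"
        by (rule lin_cong) (rule rmul, rule fl, use lx i False in auto)
    qed
    have B: "lin scale (\<lambda>v. \<Sum>k\<in>{1..m}. sgnp k (f (merge (*) k (xs[i := v]))))"
    proof (rule lin_sum, simp, rule lin_sgnp)
      fix k assume k: "k \<in> {1..m}"
      then obtain j \<phi> where j: "j < m"
        and ph: "\<phi> = (\<lambda>v. v) \<or> \<phi> = (\<lambda>v. v * (xs ! k)) \<or> \<phi> = (\<lambda>v. (xs ! (k-1)) * v)"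
        and e: "\<forall>v. merge (*) k (xs[i := v]) = (merge (*) k xs)[j := \<phi> v]"
        using merge_upd[of k m xs i "(*)"] lx i by auto
      have lp: "lin scale \<phi>" using ph lin_id lmul[OF lin_id] rmul[OF lin_id] by auto
      have lm: "length (merge (*) k xs) = m" using k lx by simp
      show "lin scale (\<lambda>v. f (merge (*) k (xs[i := v])))"
        using e lin_comp[OF fl[OF lm j] lp] by simp
    qed
    show "lin scale (\<lambda>v. hoch (*) m f (xs[i := v]))"
      unfolding hoch_def by (intro lin_add A B C)
  qed
qed


lemma hoch_cong:
  assumes "length x = n+2" "\<And>ys. length ys = n+1 \<Longrightarrow> g ys = g' ys"
  shows "hoch mu (n+1) g x = hoch mu (n+1) g' x"
proof -
  have "(\<Sum>i\<in>{1..n+1}. sgnp i (g (merge mu i x))) = (\<Sum>i\<in>{1..n+1}. sgnp i (g' (merge mu i x)))"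
    by (rule sum.cong) (use assms in auto)
  then show ?thesis unfolding hoch_def using assms by simp
qed

lemma hoch_diff: "hoch (*) m (\<lambda>ys. g ys - h ys) x = hoch (*) m g x - (hoch (*) m h x :: 'a::ring)"
  by (simp add: hoch_def sum_subtractf sgnp_diff algebra_simps)

lemma sgnp_zero[simp]: "sgnp k 0 = 0" by (simp add: sgnp_def)
lemma hoch_zero: "hoch (*) m (\<lambda>ys. 0) x = (0 :: 'a::ring)"
  by (simp add: hoch_def)

lemma hochN_neg:
  assumes "additive N"
  shows "hoch (defprod N) m (\<lambda>ys. - g ys) x = - hoch (defprod N) m g (x :: 'a::ring list)"
  using assms by (simp add: hoch_def defprod_def additive.minus sum_negf sgnp_minus sgnp_diff sgnp_plus algebra_simps)

lemma hochN_sgnp: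
  assumes "additive N"
  shows "hoch (defprod N) m (\<lambda>ys. sgnp k (g ys)) x = sgnp k (hoch (defprod N) m g (x :: 'a::ring list))"
  using hochN_neg[OF assms] by (simp add: sgnp_def)

lemma dN_hoch3:
  assumes "additive N" "length ys = n+1"
  shows "dN N n f ys = hoch3 (\<lambda>a u. N a * u) (defprod N) (\<lambda>u b. u * N b) n f ys - N (hoch (*) n f ys)"
proof (cases "n = 0")
  case True
  then obtain y where "ys = [y]" using assms(2) by (cases ys) auto
  then show ?thesis using True by (simp add: dN_def hoch3_def hoch_def sgnp_def)
next
  case False
  then show ?thesis by (simp add: dN_def hoch3_def hoch_def)
qed

lemma hochN_split:
  assumes "additive N"
  shows "hoch (defprod N) m g x - hoch (*) m (\<lambda>ys. N (g ys)) x
     = hoch3 (\<lambda>a u. N a * u) (defprod N) (\<lambda>u b. u * N b) m g x - N (hoch (*) m g (x :: 'a::ring list))"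
proof -
  have s: "N (\<Sum>i\<in>{1..m}. sgnp i (g (merge (*) i x))) = (\<Sum>i\<in>{1..m}. sgnp i (N (g (merge (*) i x))))"
  proof -
    have "N (\<Sum>i\<in>{1..m}. sgnp i (g (merge (*) i x))) = (\<Sum>i\<in>{1..m}. N (sgnp i (g (merge (*) i x))))"
      by (rule additive.sum[OF assms])
    also have "\<dots> = (\<Sum>i\<in>{1..m}. sgnp i (N (g (merge (*) i x))))"
      by (rule sum.cong[OF refl]) (rule additive_sgnp[OF assms])
    finally show ?thesis .
  qed
  have t: "N (sgnp k u) = sgnp k (N u)" for k u using assms by (simp add: additive_sgnp)
  show ?thesis
    unfolding hoch_def hoch3_def defprod_def
    using assms by (simp add: additive.add additive.diff s[simplified] t sgnp_plus sgnp_diff algebra_simps)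
qed


lemma additive_lmul: "additive (\<lambda>u. (a::'a::ring) * u)"
  by unfold_locales (simp add: distrib_left)
lemma additive_rmul: "additive (\<lambda>u. u * (b::'a::ring))"
  by unfold_locales (simp add: distrib_right)

lemma comb_aux: "(A::'a::ab_group_add) + B = 0 \<Longrightarrow> E - C = B \<Longrightarrow> D = A - C \<Longrightarrow> E + D = 0"
proof -
  assume 1: "A + B = 0" and 2: "E - C = B" and 3: "D = A - C"
  have "E = B + C" using 2 by (simp add: algebra_simps)
  then have "E + D = A + B" using 3 by (simp add: algebra_simps)
  then show ?thesis using 1 by simp
qed

lemma key:
  fixes f :: "'a::ring list \<Rightarrow> 'a"
  assumes aN: "additive N"
    and half: "\<And>y::'a. y + y = 0 \<Longrightarrow> y = 0"
    and fadd: "\<And>ys i p q. length ys = n \<Longrightarrow> i < n \<Longrightarrow> f (ys[i:=p+q]) = f (ys[i:=p]) + f (ys[i:=q])"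
    and lx: "length x = n+2"
  shows "hoch (defprod N) (n+1) (hoch (*) n f) x + hoch (*) (n+1) (dN N n f) x = 0"
proof -
  have hh: "hoch (*) m g = hoch3 (*) (*) (*) m g" for m and g :: "'a list \<Rightarrow> 'a"
    by (rule ext) (rule hoch_hoch3)
  have "hoch3 (*) (*) (*) (n+1) (hoch3 (*) (*) (*) n f) x + hoch3 (*) (*) (*) (n+1) (hoch3 (*) (*) (*) n f) x = 0"
    by (rule anticomm[OF _ _ _ _ _ _ _ _ _ fadd lx])
       (simp_all add: additive_lmul additive_rmul algebra_simps)
  then have HH: "hoch (*) (n+1) (hoch (*) n f) x = 0"
    unfolding hh by (rule half)
  have MIX: "hoch3 (\<lambda>a u. N a * u) (defprod N) (\<lambda>u b. u * N b) (n+1) (hoch3 (*) (*) (*) n f) x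
      + hoch3 (*) (*) (*) (n+1) (hoch3 (\<lambda>a u. N a * u) (defprod N) (\<lambda>u b. u * N b) n f) x = 0"
    by (rule anticomm[OF _ _ _ _ _ _ _ _ _ fadd lx])
       (simp_all add: additive_lmul additive_rmul defprod_def algebra_simps)
  have dN: "hoch (*) (n+1) (dN N n f) x
     = hoch (*) (n+1) (hoch3 (\<lambda>a u. N a * u) (defprod N) (\<lambda>u b. u * N b) n f) x
       - hoch (*) (n+1) (\<lambda>ys. N (hoch (*) n f ys)) x"
  proof -
    have "hoch (*) (n+1) (dN N n f) x = hoch (*) (n+1)
       (\<lambda>ys. hoch3 (\<lambda>a u. N a * u) (defprod N) (\<lambda>u b. u * N b) n f ys - N (hoch (*) n f ys)) x"
      by (rule hoch_cong[OF lx]) (rule dN_hoch3[OF aN])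
    then show ?thesis by (simp add: hoch_diff)
  qed
  have sp: "hoch (defprod N) (n+1) (hoch (*) n f) x - hoch (*) (n+1) (\<lambda>ys. N (hoch (*) n f ys)) x
     = hoch3 (\<lambda>a u. N a * u) (defprod N) (\<lambda>u b. u * N b) (n+1) (hoch (*) n f) x - N (hoch (*) (n+1) (hoch (*) n f) x)"
    by (rule hochN_split[OF aN])
  have N0: "N 0 = 0" using aN by (rule additive.zero)
  have MIX': "hoch (*) (n+1) (hoch3 (\<lambda>a u. N a * u) (defprod N) (\<lambda>u b. u * N b) n f) x
     + hoch3 (\<lambda>a u. N a * u) (defprod N) (\<lambda>u b. u * N b) (n+1) (hoch (*) n f) x = 0"
    using MIX unfolding hh[symmetric] by (simp add: add.commute)
  have sp': "hoch (defprod N) (n+1) (hoch (*) n f) x - hoch (*) (n+1) (\<lambda>ys. N (hoch (*) n f ys)) x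
     = hoch3 (\<lambda>a u. N a * u) (defprod N) (\<lambda>u b. u * N b) (n+1) (hoch (*) n f) x"
    using sp HH N0 by simp
  show ?thesis by (rule comb_aux[OF MIX' sp' dN])
qed


theorem theorem2p17:
  fixes scale :: "'k::field_char_0 \<Rightarrow> 'a::ring \<Rightarrow> 'a"
    and N :: "'a \<Rightarrow> 'a" and n :: nat
  assumes "module scale"
    and "\<forall>c a b. scale c (a * b) = scale c a * b"
    and "\<forall>c a b. scale c (a * b) = a * scale c b"
    and "nijenhuis scale N"
    and "n \<ge> 1"
  shows "(\<forall>f. multilinear scale n f \<longrightarrow> multilinear scale (n + 1) (Psi n f))
    \<and> (\<forall>f. multilinear scale n f \<longrightarrow> (\<forall>xs. length xs = n + 1 \<longrightarrow> dN N n f xs = 0) \<longrightarrow>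
          (\<forall>xs. length xs = n + 2 \<longrightarrow> hoch (defprod N) (n + 1) (Psi n f) xs = 0))
    \<and> (\<forall>g. multilinear scale (n - 1) g \<longrightarrow>
          (\<exists>h. multilinear scale n h \<and>
             (\<forall>xs. length xs = n + 1 \<longrightarrow> Psi n (dN N (n - 1) g) xs = hoch (defprod N) n h xs)))"
proof -
  interpret module scale by (rule assms(1))
  have aN: "additive N"
    using assms(4) by unfold_locales (simp add: nijenhuis_def linear_map_def)
  have half: "y = 0" if "y + y = 0" for y :: 'a
  proof -
    have "y = scale (1/2 + 1/2) y" by simp
    also have "\<dots> = scale (1/2) (y + y)" by (simp only: scale_left_distrib scale_right_distrib)
    also have "\<dots> = 0" using that by simp
    finally show ?thesis .
  qed
  have fadd: "\<And>ys i p q. length ys = m \<Longrightarrow> i < m \<Longrightarrow> f (ys[i:=p+q]) = f (ys[i:=p]) + f (ys[i:=q])"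
    if "multilinear scale m f" for m f
    using that unfolding multilinear_def by blast
  have psiext: "Psi m f = (\<lambda>ys. sgnp (m+1) (hoch (*) m f ys))" for m f
    by (rule ext) (simp add: Psi_def)
  have psi_ml: "multilinear scale (m+1) (Psi m f)" if "multilinear scale m f" for m f
  proof -
    have "multilinear scale (m+1) (hoch (*) m f)"
      by (rule hoch_multilinear[OF assms(1) assms(2) assms(3) that])
    then show ?thesis unfolding multilinear_lin psiext
      by (intro allI impI lin_sgnp) blast
  qed
  have keyN: "hoch (defprod N) (m+1) (Psi m f) xs = sgnp (m+1) (- hoch (*) (m+1) (dN N m f) xs)"
    if "multilinear scale m f" "length xs = m+2" for m f xs
  proof -
    have "hoch (defprod N) (m+1) (Psi m f) xs = sgnp (m+1) (hoch (defprod N) (m+1) (hoch (*) m f) xs)"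
      unfolding psiext by (rule hochN_sgnp[OF aN])
    also have "hoch (defprod N) (m+1) (hoch (*) m f) xs = - hoch (*) (m+1) (dN N m f) xs"
      using key[OF aN half fadd[OF that(1)] that(2)] by (simp add: eq_neg_iff_add_eq_0)
    finally show ?thesis .
  qed
  have c2: "\<forall>f. multilinear scale n f \<longrightarrow> (\<forall>xs. length xs = n + 1 \<longrightarrow> dN N n f xs = 0) \<longrightarrow>
          (\<forall>xs. length xs = n + 2 \<longrightarrow> hoch (defprod N) (n + 1) (Psi n f) xs = 0)"
  proof (intro allI impI)
    fix f and xs :: "'a list" assume ml: "multilinear scale n f" and z: "\<forall>xs. length xs = n + 1 \<longrightarrow> dN N n f xs = 0"
      and lx: "length xs = n + 2"
    have "hoch (*) (n+1) (dN N n f) xs = hoch (*) (n+1) (\<lambda>ys. 0) xs"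
      by (rule hoch_cong[OF lx]) (use z in auto)
    then have "hoch (*) (n+1) (dN N n f) xs = 0" by (simp add: hoch_zero)
    then show "hoch (defprod N) (n + 1) (Psi n f) xs = 0"
      using keyN[OF ml lx] by simp
  qed
  have c3: "\<forall>g. multilinear scale (n - 1) g \<longrightarrow>
          (\<exists>h. multilinear scale n h \<and>
             (\<forall>xs. length xs = n + 1 \<longrightarrow> Psi n (dN N (n - 1) g) xs = hoch (defprod N) n h xs))"
  proof (intro allI impI)
    fix g assume ml: "multilinear scale (n - 1) g"
    obtain m where nm: "n = m + 1" using assms(5) by (metis add.commute le_add_diff_inverse)
    then have mlm: "multilinear scale m g" using ml by simp
    show "\<exists>h. multilinear scale n h \<and>
             (\<forall>xs. length xs = n + 1 \<longrightarrow> Psi n (dN N (n - 1) g) xs = hoch (defprod N) n h xs)"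
    proof (intro exI[of _ "Psi m g"] conjI allI impI)
      show "multilinear scale n (Psi m g)" using psi_ml[OF mlm] nm by simp
    next
      fix xs :: "'a list" assume "length xs = n + 1"
      then have lx: "length xs = m + 2" using nm by simp
      show "Psi n (dN N (n - 1) g) xs = hoch (defprod N) n (Psi m g) xs"
        using keyN[OF mlm lx] nm by (simp add: Psi_def sgnp_minus)
    qed
  qed
  show ?thesis using psi_ml c2 c3 by blast
qed

end
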